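(* Let $G$ be a second countable locally compact Hausdorff groupoid with a fixed left Haar system $\lambda=\{\lambda^u\}_{u\in G^0}$, and let $(\Phi,\Psi)$ be a complementary pair of $N$-functions with $\Phi\in\Delta_2$. For $f\in C_c(G)$, the function $g:G^0\to\mathbb R$, $g(u)=\|f^u\|_\Phi$, where $f^u=f|_{G^u}$ and $\|\cdot\|_\Phi$ is the Orlicz norm on $L^\Phi(G^u)$, is continuous on $G^0$ with compact support.
   Context: $G^0$ is the unit space, $r(x)=xx^{-1}$, $d(x)=x^{-1}x$, $G^u=r^{-1}(u)$. The left Haar system consists of positive Radon measures $\lambda^u$ with support $G^u$ such that $u\mapsto\int f\,d\lambda^u$ is continuous for every $f\in C_c(G)$ and $\int f(xy)d\lambda^{d(x)}(y)=\int f(y)d\lambda^{r(x)}(y)$. An $N$-function is a continuous even convex $\Phi:\mathbb R\to[0,\infty)$ with $\Phi(x)=0$ iff $x=0$, $\Phi(x)/x\to0$ as $x\to0$, $\Phi(x)/x\to\infty$ as $x\to\infty$; complementary function $\Psi(y)=\sup_{x\ge0}(x|y|-\Phi(x))$. $\Phi\in\Delta_2$: there is $k>0$ with $\Phi(2x)\le k\Phi(x)$ for all $x\ge0$ ($G$ non-compact), resp. for all $x\ge x_0$ for some $x_0>0$ ($G$ compact). $L^\Phi(G^u)$ is the space of measurable $h$ on $G^u$ with $\int\Phi(\alpha|h|)d\lambda^u<\infty$ for some $\alpha>0$; its Orlicz norm is $\|h\|_\Phi=\sup\{\int_{G^u}|hk|\,d\lambda^u:\int_{G^u}\Psi(|k|)d\lambda^u\le1\}$.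 *)

theory Defs
  imports "HOL-Analysis.Analysis"
begin

text \<open>A topological groupoid whose underlying space is the whole type 'a.
  G2 is the set of composable pairs G2, gmult the partial multiplication
  (only meaningful on G2), ginv the inversion.\<close>

definition groupoid :: "('a \<times> 'a) set \<Rightarrow> ('a \<Rightarrow> 'a \<Rightarrow> 'a) \<Rightarrow> ('a \<Rightarrow> 'a) \<Rightarrow> bool" where
  "groupoid G2 gmult ginv \<longleftrightarrow>
     (\<forall>x y z. (x, y) \<in> G2 \<and> (y, z) \<in> G2 \<longrightarrow>
         (gmult x y, z) \<in> G2 \<and> (x, gmult y z) \<in> G2 \<and> gmult (gmult x y) z = gmult x (gmult y z)) \<and>
     (\<forall>x. ginv (ginv x) = x) \<and>
     (\<forall>x. (ginv x, x) \<in> G2) \<and>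
     (\<forall>x y. (x, y) \<in> G2 \<longrightarrow> gmult (ginv x) (gmult x y) = y \<and> gmult (gmult x y) (ginv y) = x)"

definition range_map :: "('a \<Rightarrow> 'a \<Rightarrow> 'a) \<Rightarrow> ('a \<Rightarrow> 'a) \<Rightarrow> 'a \<Rightarrow> 'a" where
  "range_map gmult ginv x = gmult x (ginv x)"

definition source_map :: "('a \<Rightarrow> 'a \<Rightarrow> 'a) \<Rightarrow> ('a \<Rightarrow> 'a) \<Rightarrow> 'a \<Rightarrow> 'a" where
  "source_map gmult ginv x = gmult (ginv x) x"

definition unit_space :: "('a \<Rightarrow> 'a \<Rightarrow> 'a) \<Rightarrow> ('a \<Rightarrow> 'a) \<Rightarrow> 'a set" where
  "unit_space gmult ginv = range (range_map gmult ginv)"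

text \<open>Second countable locally compact Hausdorff groupoid (second countability and
  the Hausdorff property come from the type classes in the statement).\<close>
definition lc_groupoid :: "('a::topological_space \<times> 'a) set \<Rightarrow> ('a \<Rightarrow> 'a \<Rightarrow> 'a) \<Rightarrow> ('a \<Rightarrow> 'a) \<Rightarrow> bool" where
  "lc_groupoid G2 gmult ginv \<longleftrightarrow>
     groupoid G2 gmult ginv \<and>
     locally_compact_space (euclidean :: 'a topology) \<and>
     continuous_on UNIV ginv \<and>
     continuous_on G2 (\<lambda>p. gmult (fst p) (snd p))"

definition Cc :: "('a::topological_space \<Rightarrow> real) set" where
  "Cc = {f. continuous_on UNIV f \<and> compact (closure {x. f x \<noteq> 0})}"

definition measure_support :: "'a::topological_space measure \<Rightarrow> 'a set" where
  "measure_support M = {x. \<forall>U. open U \<and> x \<in> U \<longrightarrow> emeasure M U > 0}"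

text \<open>Positive Radon measure on a second countable LCH space: a locally finite Borel measure
  (regularity is automatic in this setting).\<close>
definition radon_measure :: "'a::topological_space measure \<Rightarrow> bool" where
  "radon_measure M \<longleftrightarrow> sets M = sets borel \<and> (\<forall>K. compact K \<longrightarrow> emeasure M K < \<infinity>)"

definition left_haar_system ::
  "('a::topological_space \<times> 'a) set \<Rightarrow> ('a \<Rightarrow> 'a \<Rightarrow> 'a) \<Rightarrow> ('a \<Rightarrow> 'a) \<Rightarrow> ('a \<Rightarrow> 'a measure) \<Rightarrow> bool" where
  "left_haar_system G2 gmult ginv lam \<longleftrightarrow>
     (\<forall>u \<in> unit_space gmult ginv.
        radon_measure (lam u) \<and>
        measure_support (lam u) = range_map gmult ginv -` {u}) \<and>
     (\<forall>f \<in> Cc. continuous_on (unit_space gmult ginv) (\<lambda>u. integral\<^sup>L (lam u) f)) \<and>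
     (\<forall>f \<in> Cc. \<forall>x. (\<integral>y. f (gmult x y) \<partial>lam (source_map gmult ginv x))
                  = (\<integral>y. f y \<partial>lam (range_map gmult ginv x)))"

definition N_function :: "(real \<Rightarrow> real) \<Rightarrow> bool" where
  "N_function \<Phi> \<longleftrightarrow>
     continuous_on UNIV \<Phi> \<and> (\<forall>x. \<Phi> (- x) = \<Phi> x) \<and> convex_on UNIV \<Phi> \<and>
     (\<forall>x. \<Phi> x \<ge> 0) \<and> (\<forall>x. \<Phi> x = 0 \<longleftrightarrow> x = 0) \<and>
     ((\<lambda>x. \<Phi> x / x) \<longlongrightarrow> 0) (at 0) \<and>
     filterlim (\<lambda>x. \<Phi> x / x) at_top at_top"

definition complementary_function :: "(real \<Rightarrow> real) \<Rightarrow> real \<Rightarrow> real" where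
  "complementary_function \<Phi> y = (SUP x\<in>{0..}. x * \<bar>y\<bar> - \<Phi> x)"

definition Delta2 :: "bool \<Rightarrow> (real \<Rightarrow> real) \<Rightarrow> bool" where
  "Delta2 G_compact \<Phi> \<longleftrightarrow>
     (if G_compact then (\<exists>k>0. \<exists>x0>0. \<forall>x\<ge>x0. \<Phi> (2 * x) \<le> k * \<Phi> x)
      else (\<exists>k>0. \<forall>x\<ge>0. \<Phi> (2 * x) \<le> k * \<Phi> x))"

definition orlicz_norm :: "(real \<Rightarrow> real) \<Rightarrow> 'a measure \<Rightarrow> ('a \<Rightarrow> real) \<Rightarrow> ennreal" where
  "orlicz_norm \<Psi> M h =
     (SUP k \<in> {k \<in> borel_measurable M. (\<integral>\<^sup>+x. ennreal (\<Psi> \<bar>k x\<bar>) \<partial>M) \<le> 1}.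
        \<integral>\<^sup>+x. ennreal \<bar>h x * k x\<bar> \<partial>M)"

end

theory Submission
  imports Defs "HOL-Analysis.Analysis"
begin


lemma Nf_zero: "N_function \<Phi> \<Longrightarrow> \<Phi> 0 = 0"
  unfolding N_function_def by auto

lemma Nf_convex: "N_function \<Phi> \<Longrightarrow> convex_on UNIV \<Phi>"
  unfolding N_function_def by auto

lemma Nf_nonneg: "N_function \<Phi> \<Longrightarrow> \<Phi> x \<ge> 0"
  unfolding N_function_def by auto

lemma Nf_cont: "N_function \<Phi> \<Longrightarrow> continuous_on UNIV \<Phi>"
  unfolding N_function_def by auto

lemma Nf_even: "N_function \<Phi> \<Longrightarrow> \<Phi> (-x) = \<Phi> x"
  unfolding N_function_def by auto

lemma Nf_abs: "N_function \<Phi> \<Longrightarrow> \<Phi> \<bar>x\<bar> = \<Phi> x"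
  by (cases "x \<ge> 0") (auto simp: Nf_even)

lemma cvx:
  fixes \<Phi> :: "real \<Rightarrow> real"
  assumes "convex_on UNIV \<Phi>" "0 \<le> t" "t \<le> 1"
  shows "\<Phi> ((1 - t) * x + t * y) \<le> (1 - t) * \<Phi> x + t * \<Phi> y"
  using convex_onD[OF assms(1), of t x y] assms by simp

lemma Nf_scale:
  assumes "N_function \<Phi>" "0 \<le> c" "c \<le> 1"
  shows "\<Phi> (c * z) \<le> c * \<Phi> z"
proof -
  have "\<Phi> ((1 - c) * 0 + c * z) \<le> (1 - c) * \<Phi> 0 + c * \<Phi> z"
    using Nf_convex[OF assms(1)] assms(2,3) by (intro cvx) auto
  then show ?thesis using Nf_zero[OF assms(1)] by simp
qed

lemma Nf_mono:
  assumes "N_function \<Phi>" "0 \<le> a" "a \<le> b"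
  shows "\<Phi> a \<le> \<Phi> b"
proof (cases "b = 0")
  case True then show ?thesis using assms by simp
next
  case False
  then have b: "b > 0" using assms by simp
  define l where "l = (a + b) / (2 * b)"
  have l0: "0 \<le> l" "l \<le> 1" using assms b by (auto simp: l_def field_simps)
  have "a = (1 - l) * (- b) + l * b" using b by (simp add: l_def field_simps)
  then have "\<Phi> a = \<Phi> ((1 - l) * (- b) + l * b)" by simp
  also have "\<dots> \<le> (1 - l) * \<Phi> (- b) + l * \<Phi> b"
    using Nf_convex[OF assms(1)] l0 by (intro cvx) auto
  also have "\<dots> = \<Phi> b" using Nf_even[OF assms(1)] by (simp add: algebra_simps)
  finally show ?thesis .
qed

lemma Nf_bdd:
  assumes "N_function \<Phi>"
  shows "bdd_above ((\<lambda>x. x * \<bar>y\<bar> - \<Phi> x) ` {0..})"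
proof -
  have "filterlim (\<lambda>x. \<Phi> x / x) at_top at_top" using assms unfolding N_function_def by auto
  then have "eventually (\<lambda>x. \<Phi> x / x \<ge> \<bar>y\<bar>) at_top" by (simp add: filterlim_at_top)
  then obtain X where X: "\<And>x. x \<ge> X \<Longrightarrow> \<Phi> x / x \<ge> \<bar>y\<bar>" by (auto simp: eventually_at_top_linorder)
  define X' where "X' = max X 1"
  have "x * \<bar>y\<bar> - \<Phi> x \<le> X' * \<bar>y\<bar>" if "x \<ge> 0" for x
  proof (cases "x \<le> X'")
    case True
    then have "x * \<bar>y\<bar> \<le> X' * \<bar>y\<bar>" by (simp add: mult_right_mono)
    then show ?thesis using Nf_nonneg[OF assms, of x] by linarith
  next
    case False
    then have "x > 0" "x \<ge> X" by (auto simp: X'_def)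
    with X[of x] have "\<bar>y\<bar> * x \<le> \<Phi> x" by (simp add: pos_le_divide_eq)
    then show ?thesis using \<open>x>0\<close> unfolding X'_def by (smt (verit) mult.commute mult_nonneg_nonneg abs_ge_zero)
  qed
  then show ?thesis by (auto simp: bdd_above_def)
qed

lemma Young:
  assumes "N_function \<Phi>" "0 \<le> x"
  shows "x * \<bar>y\<bar> \<le> \<Phi> x + complementary_function \<Phi> y"
proof -
  have "x * \<bar>y\<bar> - \<Phi> x \<le> complementary_function \<Phi> y"
    unfolding complementary_function_def using assms by (intro cSUP_upper Nf_bdd) auto
  then show ?thesis by simp
qed

lemma Psi_bound:
  assumes "N_function \<Phi>" "s > 0" "\<eta> > 0"
  defines "y \<equiv> (\<Phi> ((1 + \<eta>) * s) - \<Phi> s) / (\<eta> * s)"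
  shows "complementary_function \<Phi> y \<le> (1 + \<eta>) * s * y - \<Phi> s"
proof -
  define s' where "s' = (1 + \<eta>) * s"
  have ss': "s < s'" using assms by (simp add: s'_def)
  have ys: "y = (\<Phi> s' - \<Phi> s) / (s' - s)" unfolding y_def s'_def by (simp add: algebra_simps)
  have y0: "y \<ge> 0" unfolding ys using Nf_mono[OF assms(1), of s s'] ss' assms by simp
  have cv: "convex_on UNIV \<Phi>" using Nf_convex[OF assms(1)] .
  have key: "x * y - \<Phi> x \<le> s' * y - \<Phi> s" if x: "x \<ge> 0" for x
  proof -
    consider "x < s" | "s \<le> x" "x \<le> s'" | "s' < x" by linarith
    then show ?thesis
    proof cases
      case 1
      define l where "l = (s - x) / (s' - x)"
      have l: "0 \<le> l" "l \<le> 1" using 1 ss' by (auto simp: l_def field_simps)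
      have "l * (s' - x) = s - x" using 1 ss' by (simp add: l_def)
      then have "s = (1 - l) * x + l * s'" by (simp add: algebra_simps)
      then have "\<Phi> s \<le> (1 - l) * \<Phi> x + l * \<Phi> s'" using cvx[OF cv l] by simp
      then have "(s' - x) * \<Phi> s \<le> (s' - x) * ((1 - l) * \<Phi> x + l * \<Phi> s')"
        using 1 ss' by (intro mult_left_mono) auto
      also have "\<dots> = ((s' - x) * (1 - l)) * \<Phi> x + ((s' - x) * l) * \<Phi> s'"
        by (simp add: algebra_simps)
      also have "(s' - x) * l = s - x" using \<open>l * (s' - x) = s - x\<close> by (simp add: mult.commute)
      also have "(s' - x) * (1 - l) = s' - s" using \<open>l * (s' - x) = s - x\<close> by (simp add: algebra_simps)
      
      finally have A: "(s' - x) * \<Phi> s \<le> (s' - s) * \<Phi> x + (s - x) * \<Phi> s'" .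
      have "(\<Phi> s - \<Phi> x) * (s' - s) \<le> (\<Phi> s' - \<Phi> s) * (s - x)"
        using A by (simp add: algebra_simps)
      then have "\<Phi> s - \<Phi> x \<le> y * (s - x)" unfolding ys using ss'
        by (simp add: field_simps)
      moreover have "s * y \<le> s' * y" using ss' y0 by (simp add: mult_right_mono)
      ultimately show ?thesis by (simp add: algebra_simps)
    next
      case 2
      have "x * y \<le> s' * y" using 2 y0 by (simp add: mult_right_mono)
      moreover have "\<Phi> s \<le> \<Phi> x" using Nf_mono[OF assms(1), of s x] 2 assms by simp
      ultimately show ?thesis by simp
    next
      case 3
      define l where "l = (s' - s) / (x - s)"
      have l: "0 \<le> l" "l \<le> 1" using 3 ss' by (auto simp: l_def field_simps)
      have "l * (x - s) = s' - s" using 3 ss' by (simp add: l_def)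
      then have "s' = (1 - l) * s + l * x" by (simp add: algebra_simps)
      then have "\<Phi> s' \<le> (1 - l) * \<Phi> s + l * \<Phi> x" using cvx[OF cv l] by simp
      then have "(x - s) * \<Phi> s' \<le> (x - s) * ((1 - l) * \<Phi> s + l * \<Phi> x)"
        using 3 ss' by (intro mult_left_mono) auto
      also have "\<dots> = ((x - s) * (1 - l)) * \<Phi> s + ((x - s) * l) * \<Phi> x"
        by (simp add: algebra_simps)
      also have "(x - s) * l = s' - s" using \<open>l * (x - s) = s' - s\<close> by (simp add: mult.commute)
      also have "(x - s) * (1 - l) = x - s'" using \<open>l * (x - s) = s' - s\<close> by (simp add: algebra_simps)
      
      finally have A: "(x - s) * \<Phi> s' \<le> (x - s') * \<Phi> s + (s' - s) * \<Phi> x" .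
      have "(\<Phi> s' - \<Phi> s) * (x - s') \<le> (\<Phi> x - \<Phi> s') * (s' - s)"
        using A by (simp add: algebra_simps)
      then have "y * (x - s') \<le> \<Phi> x - \<Phi> s'" unfolding ys using ss'
        by (simp add: field_simps)
      moreover have "\<Phi> s \<le> \<Phi> s'" using Nf_mono[OF assms(1), of s s'] ss' assms by simp
      ultimately show ?thesis by (simp add: algebra_simps)
    qed
  qed
  have "complementary_function \<Phi> y \<le> s' * y - \<Phi> s"
    unfolding complementary_function_def using key y0 by (intro cSUP_least) auto
  then show ?thesis by (simp add: s'_def)
qed

definition yf :: "(real \<Rightarrow> real) \<Rightarrow> real \<Rightarrow> real \<Rightarrow> real" where
  "yf \<Phi> \<eta> s = (\<Phi> ((1 + \<eta>) * s) - \<Phi> s) / (\<eta> * s)"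

lemma yf_zero[simp]: "yf \<Phi> \<eta> 0 = 0" by (simp add: yf_def)

lemma yf_nonneg:
  assumes "N_function \<Phi>" "\<eta> > 0" "s \<ge> 0"
  shows "yf \<Phi> \<eta> s \<ge> 0"
  unfolding yf_def using Nf_mono[OF assms(1), of s "(1 + \<eta>) * s"] assms
  by (intro divide_nonneg_nonneg) (auto simp: algebra_simps)

lemma yf_cont:
  assumes "N_function \<Phi>" "\<eta> > 0"
  shows "continuous_on UNIV (yf \<Phi> \<eta>)"
proof -
  have cP: "isCont \<Phi> x" for x using Nf_cont[OF assms(1)]
    by (simp add: continuous_on_eq_continuous_at)
  have lim0: "((\<lambda>x. \<Phi> x / x) \<longlongrightarrow> 0) (at 0)" using assms(1) unfolding N_function_def by auto
  have "filterlim (\<lambda>s. (1 + \<eta>) * s) (at 0) (at (0::real))"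
  proof (rule filterlim_atI)
    show "((\<lambda>s. (1 + \<eta>) * s) \<longlongrightarrow> 0) (at (0::real))"
      by (auto intro!: tendsto_eq_intros)
    show "\<forall>\<^sub>F x in at 0. (1 + \<eta>) * x \<noteq> 0" using assms(2)
      by (simp add: eventually_at_filter)
  qed
  from filterlim_compose[OF lim0 this]
  have l1: "((\<lambda>s. \<Phi> ((1 + \<eta>) * s) / ((1 + \<eta>) * s)) \<longlongrightarrow> 0) (at 0)" by simp
  have l2: "((\<lambda>s. ((1 + \<eta>) * (\<Phi> ((1 + \<eta>) * s) / ((1 + \<eta>) * s)) - \<Phi> s / s) / \<eta>) \<longlongrightarrow> 0) (at 0)"
    using tendsto_divide[OF tendsto_diff[OF tendsto_mult[OF tendsto_const l1] lim0] tendsto_const, of \<eta> "1+\<eta>"] assms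
    by simp
  have ev: "\<forall>\<^sub>F s in at 0. ((1 + \<eta>) * (\<Phi> ((1 + \<eta>) * s) / ((1 + \<eta>) * s)) - \<Phi> s / s) / \<eta> = yf \<Phi> \<eta> s"
    unfolding eventually_at_filter using assms(2)
  proof (intro always_eventually allI impI)
    fix s :: real assume "s \<noteq> 0"
    then have "(1 + \<eta>) * s \<noteq> 0" "1 + \<eta> \<noteq> 0" using assms(2) by auto
    then have "(1 + \<eta>) * (\<Phi> ((1 + \<eta>) * s) / ((1 + \<eta>) * s)) = \<Phi> ((1 + \<eta>) * s) / s"
      by simp
    then show "((1 + \<eta>) * (\<Phi> ((1 + \<eta>) * s) / ((1 + \<eta>) * s)) - \<Phi> s / s) / \<eta> = yf \<Phi> \<eta> s"
      unfolding yf_def by (simp add: diff_divide_distrib mult.commute)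
  qed
  have "(yf \<Phi> \<eta> \<longlongrightarrow> yf \<Phi> \<eta> 0) (at 0)" using tendsto_cong[OF ev] l2 by simp
  then have c0: "isCont (yf \<Phi> \<eta>) 0" by (simp add: isCont_def)
  have "isCont (yf \<Phi> \<eta>) s" for s
  proof (cases "s = 0")
    case True then show ?thesis using c0 by simp
  next
    case False
    have "isCont (\<lambda>s. \<Phi> ((1 + \<eta>) * s)) s" by (intro isCont_o2[OF _ cP]) (auto intro!: continuous_intros)
    then show ?thesis unfolding yf_def using False assms(2)
      by (auto intro!: continuous_intros cP)
  qed
  then show ?thesis by (simp add: continuous_on_eq_continuous_at)
qed

lemma core:
  fixes I :: "real \<Rightarrow> real" and \<eta> :: real
  assumes cont: "continuous_on UNIV I" and I0: "I 0 = 0"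
    and nn: "\<And>t. t \<ge> 0 \<Longrightarrow> I t \<ge> 0"
    and sup: "\<And>t. t \<ge> 0 \<Longrightarrow> (1 + \<eta>) * I t \<le> I ((1 + \<eta>) * t)"
    and eta: "\<eta> > 0"
  shows "(\<exists>t>0. (1 + \<eta>) / \<eta> * (I ((1 + \<eta>) * t) - I t) - I t = 1) \<or> (\<forall>t>0. I t < 1 / \<eta>)"
proof (rule disjCI)
  assume "\<not> (\<forall>t>0. I t < 1 / \<eta>)"
  then obtain t1 where t1: "t1 > 0" "I t1 \<ge> 1 / \<eta>" by (auto simp: not_less)
  define G where "G t = (1 + \<eta>) / \<eta> * (I ((1 + \<eta>) * t) - I t) - I t" for t
  have G_ge: "G t \<ge> \<eta> * I t" if "t \<ge> 0" for t
  proof -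
    have "I ((1 + \<eta>) * t) - I t \<ge> \<eta> * I t" using sup[OF that] by (simp add: algebra_simps)
    then have "(1 + \<eta>) / \<eta> * (I ((1 + \<eta>) * t) - I t) \<ge> (1 + \<eta>) / \<eta> * (\<eta> * I t)"
      using eta by (intro mult_left_mono) auto
    moreover have "(1 + \<eta>) / \<eta> * (\<eta> * I t) = (1 + \<eta>) * I t" using eta by simp
    ultimately have "G t \<ge> (1 + \<eta>) * I t - I t" unfolding G_def by linarith
    then show ?thesis by (simp add: algebra_simps)
  qed
  have G1: "G t1 \<ge> 1" using G_ge[of t1] t1 eta by (simp add: field_simps)
  have G_le: "G t \<le> (1 + \<eta>) / \<eta> * I ((1 + \<eta>) * t)" if "t \<ge> 0" for t
  proof -
    have "(1 + \<eta>) / \<eta> * I t \<ge> 0" using nn[OF that] eta by simp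
    then show ?thesis using nn[OF that] unfolding G_def by (simp add: algebra_simps)
  qed
  have cF: "continuous_on UNIV (\<lambda>t. (1 + \<eta>) / \<eta> * I ((1 + \<eta>) * t))"
    by (intro continuous_intros continuous_on_compose2[OF cont]) auto
  then have "((\<lambda>t. (1 + \<eta>) / \<eta> * I ((1 + \<eta>) * t)) \<longlongrightarrow> 0) (at 0 within {0<..})"
    using I0 unfolding continuous_on_def by (metis UNIV_I mult_zero_right tendsto_within_subset subset_UNIV)
  then have "eventually (\<lambda>t. (1 + \<eta>) / \<eta> * I ((1 + \<eta>) * t) < 1) (at_right 0)"
    by (rule order_tendstoD) simp
  then obtain b where b: "b > 0" "\<And>y. y > 0 \<Longrightarrow> y < b \<Longrightarrow> (1 + \<eta>) / \<eta> * I ((1 + \<eta>) * y) < 1"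
    unfolding eventually_at_right_field by auto
  define t0 where "t0 = min t1 (b / 2)"
  have t0: "t0 > 0" "t0 \<le> t1" "t0 < b" using b t1 by (auto simp: t0_def)
  have G0: "G t0 \<le> 1" using G_le[of t0] b(2)[of t0] t0 by simp
  have cG: "continuous_on {t0..t1} G" unfolding G_def
    by (intro continuous_intros continuous_on_compose2[OF cont] continuous_on_subset[OF cont]) auto
  from IVT'[of G t0 1 t1, OF G0 G1 t0(2) cG]
  obtain t where "t0 \<le> t" "G t = 1" by auto
  then show "\<exists>t>0. (1 + \<eta>) / \<eta> * (I ((1 + \<eta>) * t) - I t) - I t = 1"
    using t0 unfolding G_def by (intro exI[of _ t]) auto
qed



lemma Cc_comp:
  assumes "f \<in> Cc" "continuous_on UNIV Q" "Q 0 = 0"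
  shows "(\<lambda>x. Q (f x)) \<in> Cc"
proof -
  have cf: "continuous_on UNIV f" and cpt: "compact (closure {x. f x \<noteq> 0})"
    using assms(1) unfolding Cc_def by auto
  have "{x. Q (f x) \<noteq> 0} \<subseteq> {x. f x \<noteq> 0}" using assms(3) by auto
  then have sub: "closure {x. Q (f x) \<noteq> 0} \<subseteq> closure {x. f x \<noteq> 0}" by (rule closure_mono)
  have "compact (closure {x. Q (f x) \<noteq> 0} \<inter> closure {x. f x \<noteq> 0})"
    using cpt by (intro closed_Int_compact) auto
  moreover have "closure {x. Q (f x) \<noteq> 0} \<inter> closure {x. f x \<noteq> 0} = closure {x. Q (f x) \<noteq> 0}"
    using sub by auto
  moreover have "continuous_on UNIV (\<lambda>x. Q (f x))"
    by (rule continuous_on_compose2[OF assms(2) cf]) auto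
  ultimately show ?thesis unfolding Cc_def by auto
qed

lemma Cc_borel:
  assumes "F \<in> Cc" "sets M = sets borel"
  shows "F \<in> borel_measurable M"
proof -
  have "F \<in> borel_measurable borel" using assms(1) unfolding Cc_def
    by (intro borel_measurable_continuous_onI) auto
  moreover have "(borel_measurable M :: ('a \<Rightarrow> real) set) = borel_measurable borel"
    by (rule measurable_cong_sets[OF assms(2) refl])
  ultimately show ?thesis by simp
qed

lemma Cc_integrable:
  fixes F :: "'a::topological_space \<Rightarrow> real"
  assumes "radon_measure M" "F \<in> Cc"
  shows "integrable M F"
proof -
  define C where "C = closure {x. F x \<noteq> 0}"
  have cF: "continuous_on UNIV F" and cpt: "compact C" using assms(2) unfolding Cc_def C_def by auto
  have sM: "sets M = sets borel" and fin: "emeasure M C < \<infinity>"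
    using assms(1) cpt unfolding radon_measure_def by auto
  have "compact (F ` C)" by (rule compact_continuous_image[OF continuous_on_subset[OF cF] cpt]) simp
  from compact_imp_bounded[OF this] obtain B where "\<forall>y\<in>F ` C. norm y \<le> B"
    unfolding bounded_iff by auto
  then have B: "\<And>x. x \<in> C \<Longrightarrow> \<bar>F x\<bar> \<le> B" by auto
  have Cs: "C \<in> sets M" using sM unfolding C_def by simp
  have bnd: "norm (F x) \<le> norm (B * indicator C x)" for x
  proof (cases "x \<in> C")
    case True then show ?thesis using B[of x] by auto
  next
    case False
    then have "F x = 0" using closure_subset[of "{x. F x \<noteq> 0}"] unfolding C_def by auto
    then show ?thesis by simp
  qed
  have i1: "integrable M (\<lambda>x. B * indicator C x)" using Cs fin
    by (intro integrable_mult_right integrable_real_indicator)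
  have i2: "F \<in> borel_measurable M" by (rule Cc_borel[OF assms(2) sM])
  have i3: "AE x in M. norm (F x) \<le> norm (B * indicator C x)" using bnd by simp
  show ?thesis by (rule Bochner_Integration.integrable_bound[OF i1 i2 i3])
qed

lemma support_null:
  fixes M :: "'a::second_countable_topology measure"
  assumes "radon_measure M" "measure_support M = S"
  shows "- S \<in> null_sets M"
proof -
  have sM: "sets M = sets borel" using assms(1) unfolding radon_measure_def by auto
  define F where "F = {U. open U \<and> emeasure M U = 0}"
  have "- S = \<Union>F"
  proof
    show "- S \<subseteq> \<Union>F"
    proof
      fix x assume "x \<in> - S"
      then obtain U where "open U" "x \<in> U" "\<not> emeasure M U > 0"
        unfolding assms(2)[symmetric] measure_support_def by blast
      then show "x \<in> \<Union>F" unfolding F_def using not_gr_zero by blast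
    qed
    show "\<Union>F \<subseteq> - S"
    proof
      fix x assume "x \<in> \<Union>F"
      then obtain U where "open U" "x \<in> U" "emeasure M U = 0" unfolding F_def by blast
      then show "x \<in> - S" unfolding assms(2)[symmetric] measure_support_def by force
    qed
  qed
  have "\<And>U. U \<in> F \<Longrightarrow> open U" unfolding F_def by blast
  from Lindelof[of F, OF this]
  obtain F' where F': "F' \<subseteq> F" "countable F'" "\<Union>F' = \<Union>F" by blast
  have "(\<Union>U\<in>F'. U) \<in> null_sets M"
  proof (rule null_sets_UN'[OF F'(2)])
    fix U assume "U \<in> F'"
    then have "open U" "emeasure M U = 0" using F'(1) unfolding F_def by auto
    moreover have "U \<in> sets M" unfolding sM using \<open>open U\<close> by (rule borel_open)
    ultimately show "U \<in> null_sets M" by (intro null_setsI)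
  qed
  moreover have "(\<Union>U\<in>F'. U) = - S" using F'(3) \<open>- S = \<Union>F\<close> by simp
  ultimately show ?thesis by (simp only:)
qed

lemma transfer:
  fixes M :: "'a::second_countable_topology measure"
  assumes "radon_measure M" "measure_support M = S" "closed S" "F \<in> Cc" "\<And>x. F x \<ge> 0"
  shows "(\<integral>\<^sup>+x. ennreal (F x) \<partial>restrict_space M S) = ennreal (\<integral>x. F x \<partial>M)"
proof -
  have sM: "sets M = sets borel" using assms(1) unfolding radon_measure_def by auto
  have Ss: "S \<inter> space M \<in> sets M" using sM assms(3) by auto
  have AE: "AE x in M. x \<in> S" using AE_not_in[OF support_null[OF assms(1,2)]] by simp
  have AE2: "AE x in M. ennreal (F x) * indicator S x = ennreal (F x)"
    using AE by eventually_elim simp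
  have "(\<integral>\<^sup>+x. ennreal (F x) \<partial>restrict_space M S) = (\<integral>\<^sup>+x. ennreal (F x) * indicator S x \<partial>M)"
    by (rule nn_integral_restrict_space[OF Ss])
  also have "\<dots> = (\<integral>\<^sup>+x. ennreal (F x) \<partial>M)"
    by (rule nn_integral_cong_AE[OF AE2])
  also have "\<dots> = ennreal (\<integral>x. F x \<partial>M)"
    by (rule nn_integral_eq_integral[OF Cc_integrable[OF assms(1,4)]]) (simp add: assms(5))
  finally show ?thesis .
qed



lemma meas_restr:
  assumes "F \<in> Cc" "sets M = sets borel"
  shows "F \<in> borel_measurable (restrict_space M S)"
  by (rule measurable_restrict_space1[OF Cc_borel[OF assms]])

lemma orlicz_upper:
  fixes M :: "'a::second_countable_topology measure"
  assumes rad: "radon_measure M" and sup: "measure_support M = S" and cl: "closed S"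
    and NP: "N_function \<Phi>" and NQ: "N_function \<Psi>" and PQ: "\<Psi> = complementary_function \<Phi>"
    and f: "f \<in> Cc" and t: "t > 0"
  shows "orlicz_norm \<Psi> (restrict_space M S) f \<le> ennreal ((1 + (\<integral>x. \<Phi> (t * \<bar>f x\<bar>) \<partial>M)) / t)"
proof -
  let ?M = "restrict_space M S"
  have sM: "sets M = sets borel" using rad unfolding radon_measure_def by auto
  have cP: "continuous_on UNIV \<Phi>" by (rule Nf_cont[OF NP])
  have cQ: "continuous_on UNIV \<Psi>" by (rule Nf_cont[OF NQ])
  define I where "I = (\<integral>x. \<Phi> (t * \<bar>f x\<bar>) \<partial>M)"
  have I0: "I \<ge> 0" unfolding I_def by (rule Bochner_Integration.integral_nonneg) (simp add: Nf_nonneg[OF NP])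
  have Cc1: "(\<lambda>x. \<Phi> (t * \<bar>f x\<bar>) / t) \<in> Cc"
    by (rule Cc_comp[OF f, of "\<lambda>z. \<Phi> (t * \<bar>z\<bar>) / t"])
       (use t in \<open>auto intro!: continuous_intros continuous_on_compose2[OF cP] simp: Nf_zero[OF NP]\<close>)
  have tr: "(\<integral>\<^sup>+x. ennreal (\<Phi> (t * \<bar>f x\<bar>) / t) \<partial>?M) = ennreal (I / t)"
    using transfer[OF rad sup cl Cc1] Nf_nonneg[OF NP] t unfolding I_def by simp
  show ?thesis
    unfolding orlicz_norm_def
  proof (rule SUP_least)
    fix k assume "k \<in> {k \<in> borel_measurable ?M. (\<integral>\<^sup>+x. ennreal (\<Psi> \<bar>k x\<bar>) \<partial>?M) \<le> 1}"
    then have km: "k \<in> borel_measurable ?M" and kI: "(\<integral>\<^sup>+x. ennreal (\<Psi> \<bar>k x\<bar>) \<partial>?M) \<le> 1" by auto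
    have m1: "(\<lambda>x. ennreal (\<Phi> (t * \<bar>f x\<bar>) / t)) \<in> borel_measurable ?M"
      using meas_restr[OF Cc1 sM] by simp
    have m2: "(\<lambda>x. \<Psi> \<bar>k x\<bar>) \<in> borel_measurable ?M"
      by (rule borel_measurable_continuous_on[OF cQ]) (use km in simp)
    then have m2': "(\<lambda>x. ennreal (\<Psi> \<bar>k x\<bar>)) \<in> borel_measurable ?M" by simp
    have pt: "ennreal \<bar>f x * k x\<bar> \<le> ennreal (\<Phi> (t * \<bar>f x\<bar>) / t) + ennreal (1 / t) * ennreal (\<Psi> \<bar>k x\<bar>)" for x
    proof -
      have "t * \<bar>f x\<bar> * \<bar>k x\<bar> \<le> \<Phi> (t * \<bar>f x\<bar>) + \<Psi> (k x)"
        using Young[OF NP, of "t * \<bar>f x\<bar>" "k x"] t PQ by simp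
      also have "\<Psi> (k x) = \<Psi> \<bar>k x\<bar>" using Nf_abs[OF NQ] by simp
      finally have "t * (\<bar>f x\<bar> * \<bar>k x\<bar>) \<le> \<Phi> (t * \<bar>f x\<bar>) + \<Psi> \<bar>k x\<bar>" by (simp add: mult.assoc)
      then have "\<bar>f x\<bar> * \<bar>k x\<bar> \<le> (\<Phi> (t * \<bar>f x\<bar>) + \<Psi> \<bar>k x\<bar>) / t"
        using t by (simp add: pos_le_divide_eq mult.commute)
      also have "\<dots> = \<Phi> (t * \<bar>f x\<bar>) / t + 1 / t * \<Psi> \<bar>k x\<bar>" by (simp add: add_divide_distrib)
      finally have le: "\<bar>f x * k x\<bar> \<le> \<Phi> (t * \<bar>f x\<bar>) / t + 1 / t * \<Psi> \<bar>k x\<bar>" by (simp add: abs_mult)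
      have n1: "\<Phi> (t * \<bar>f x\<bar>) / t \<ge> 0" using Nf_nonneg[OF NP] t by simp
      have n2: "1 / t * \<Psi> \<bar>k x\<bar> \<ge> 0" using Nf_nonneg[OF NQ] t by simp
      have "ennreal \<bar>f x * k x\<bar> \<le> ennreal (\<Phi> (t * \<bar>f x\<bar>) / t + 1 / t * \<Psi> \<bar>k x\<bar>)"
        using le by (rule ennreal_leI)
      also have "\<dots> = ennreal (\<Phi> (t * \<bar>f x\<bar>) / t) + ennreal (1 / t * \<Psi> \<bar>k x\<bar>)"
        using n1 n2 by (rule ennreal_plus)
      also have "ennreal (1 / t * \<Psi> \<bar>k x\<bar>) = ennreal (1 / t) * ennreal (\<Psi> \<bar>k x\<bar>)"
        using t Nf_nonneg[OF NQ] by (intro ennreal_mult) auto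
      finally show ?thesis .
    qed
    have "(\<integral>\<^sup>+x. ennreal \<bar>f x * k x\<bar> \<partial>?M)
        \<le> (\<integral>\<^sup>+x. ennreal (\<Phi> (t * \<bar>f x\<bar>) / t) + ennreal (1 / t) * ennreal (\<Psi> \<bar>k x\<bar>) \<partial>?M)"
      by (rule nn_integral_mono) (rule pt)
    also have "\<dots> = (\<integral>\<^sup>+x. ennreal (\<Phi> (t * \<bar>f x\<bar>) / t) \<partial>?M) + ennreal (1 / t) * (\<integral>\<^sup>+x. ennreal (\<Psi> \<bar>k x\<bar>) \<partial>?M)"
    proof -
      have mm: "(\<lambda>x. ennreal (1 / t) * ennreal (\<Psi> \<bar>k x\<bar>)) \<in> borel_measurable ?M"
        by (intro borel_measurable_times_ennreal m2' measurable_const) simp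
      show ?thesis
        by (simp only: nn_integral_add[OF m1 mm] nn_integral_cmult[OF m2'])
    qed
    also have "\<dots> \<le> ennreal (I / t) + ennreal (1 / t) * 1"
    proof (rule add_mono)
      show "(\<integral>\<^sup>+x. ennreal (\<Phi> (t * \<bar>f x\<bar>) / t) \<partial>?M) \<le> ennreal (I / t)" by (simp only: tr)
      show "ennreal (1 / t) * (\<integral>\<^sup>+x. ennreal (\<Psi> \<bar>k x\<bar>) \<partial>?M) \<le> ennreal (1 / t) * 1"
        by (rule mult_left_mono[OF kI]) simp
    qed
    also have "\<dots> = ennreal ((1 + I) / t)"
    proof -
      have "ennreal (I / t) + ennreal (1 / t) * 1 = ennreal (I / t + 1 / t)"
        using I0 t by (simp only: mult_1_right ennreal_plus[symmetric]) simp_all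
      also have "I / t + 1 / t = (1 + I) / t" by (simp add: add_divide_distrib)
      finally show ?thesis .
    qed
    finally show "(\<integral>\<^sup>+x. ennreal \<bar>f x * k x\<bar> \<partial>?M) \<le> ennreal ((1 + (\<integral>x. \<Phi> (t * \<bar>f x\<bar>) \<partial>M)) / t)"
      unfolding I_def .
  qed
qed

lemma orlicz_lower:
  fixes M :: "'a::second_countable_topology measure"
  assumes rad: "radon_measure M" and sup: "measure_support M = S" and cl: "closed S"
    and NQ: "N_function \<Psi>"
    and f: "f \<in> Cc" and cQf: "continuous_on UNIV Q" and Q0: "Q 0 = 0" and Qn: "\<And>z. Q z \<ge> 0"
  shows "ennreal ((\<integral>x. \<bar>f x\<bar> * Q (f x) \<partial>M) / max 1 (\<integral>x. \<Psi> (Q (f x)) \<partial>M))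
           \<le> orlicz_norm \<Psi> (restrict_space M S) f"
proof -
  let ?M = "restrict_space M S"
  define c where "c = max 1 (\<integral>x. \<Psi> (Q (f x)) \<partial>M)"
  have c1: "c \<ge> 1" unfolding c_def by simp
  have sM: "sets M = sets borel" using rad unfolding radon_measure_def by auto
  have cQ: "continuous_on UNIV \<Psi>" by (rule Nf_cont[OF NQ])
  define k where "k x = Q (f x) / c" for x
  have Cck: "(\<lambda>x. Q (f x) / c) \<in> Cc"
    by (rule Cc_comp[OF f, of "\<lambda>z. Q z / c"]) (use c1 in \<open>auto intro!: continuous_intros cQf simp: Q0\<close>)
  have km: "k \<in> borel_measurable ?M" unfolding k_def by (rule meas_restr[OF Cck sM])
  have Cc2: "(\<lambda>x. \<Psi> (Q (f x)) / c) \<in> Cc"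
    by (rule Cc_comp[OF f, of "\<lambda>z. \<Psi> (Q z) / c"])
       (use c1 in \<open>auto intro!: continuous_intros continuous_on_compose2[OF cQ cQf] simp: Q0 Nf_zero[OF NQ]\<close>)
  have Cc3: "(\<lambda>x. \<bar>f x\<bar> * Q (f x) / c) \<in> Cc"
    by (rule Cc_comp[OF f, of "\<lambda>z. \<bar>z\<bar> * Q z / c"]) (use c1 in \<open>auto intro!: continuous_intros cQf simp: Q0\<close>)
  have "(\<integral>\<^sup>+x. ennreal (\<Psi> \<bar>k x\<bar>) \<partial>?M) \<le> (\<integral>\<^sup>+x. ennreal (\<Psi> (Q (f x)) / c) \<partial>?M)"
  proof (rule nn_integral_mono)
    fix x
    have "\<Psi> \<bar>k x\<bar> = \<Psi> ((1 / c) * Q (f x))" using Qn[of "f x"] c1 unfolding k_def by simp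
    also have "\<dots> \<le> (1 / c) * \<Psi> (Q (f x))" using c1 by (intro Nf_scale[OF NQ]) auto
    finally show "ennreal (\<Psi> \<bar>k x\<bar>) \<le> ennreal (\<Psi> (Q (f x)) / c)" by (intro ennreal_leI) simp
  qed
  also have "\<dots> = ennreal (\<integral>x. \<Psi> (Q (f x)) / c \<partial>M)"
    by (rule transfer[OF rad sup cl Cc2]) (use c1 Nf_nonneg[OF NQ] in simp)
  also have "\<dots> \<le> 1"
  proof -
    have "(\<integral>x. \<Psi> (Q (f x)) / c \<partial>M) = (\<integral>x. \<Psi> (Q (f x)) \<partial>M) / c" by simp
    also have "\<dots> \<le> 1"
    proof -
      have "(\<integral>x. \<Psi> (Q (f x)) \<partial>M) \<le> c" unfolding c_def by simp
      moreover have "c > 0" using c1 by simp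
      ultimately show ?thesis by (simp add: divide_le_eq_1)
    qed
    finally show ?thesis by (simp add: ennreal_le_1)
  qed
  finally have kin: "k \<in> {k \<in> borel_measurable ?M. (\<integral>\<^sup>+x. ennreal (\<Psi> \<bar>k x\<bar>) \<partial>?M) \<le> 1}"
    using km by simp
  have "ennreal ((\<integral>x. \<bar>f x\<bar> * Q (f x) \<partial>M) / c) = ennreal (\<integral>x. \<bar>f x\<bar> * Q (f x) / c \<partial>M)"
    by simp
  also have "\<dots> = (\<integral>\<^sup>+x. ennreal (\<bar>f x\<bar> * Q (f x) / c) \<partial>?M)"
    by (rule transfer[OF rad sup cl Cc3, symmetric]) (use c1 Qn in simp)
  also have "\<dots> = (\<integral>\<^sup>+x. ennreal \<bar>f x * k x\<bar> \<partial>?M)"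
    using Qn c1 unfolding k_def by (intro nn_integral_cong) (simp add: abs_mult)
  also have "\<dots> \<le> orlicz_norm \<Psi> ?M f"
    unfolding orlicz_norm_def by (rule SUP_upper[OF kin])
  finally show ?thesis unfolding c_def .
qed



lemma int_Cc:
  fixes f :: "'a::topological_space \<Rightarrow> real" and Q :: "real \<Rightarrow> real"
  assumes "radon_measure M" "f \<in> Cc" "continuous_on UNIV Q" "Q 0 = 0"
  shows "integrable M (\<lambda>x. Q (f x))"
  by (rule Cc_integrable[OF assms(1) Cc_comp[OF assms(2-4)]])

lemma contPhi: "N_function \<Phi> \<Longrightarrow> continuous_on UNIV (\<lambda>z. \<Phi> (s * \<bar>z\<bar>))"
  by (rule continuous_on_compose2[OF Nf_cont]) (auto intro!: continuous_intros)

lemma fiber: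
  fixes M :: "'a::second_countable_topology measure"
  assumes rad: "radon_measure M"
    and NP: "N_function \<Phi>" and NQ: "N_function \<Psi>" and PQ: "\<Psi> = complementary_function \<Phi>"
    and f: "f \<in> Cc" and eta: "\<eta> > 0"
  defines "I \<equiv> \<lambda>s. \<integral>x. \<Phi> (s * \<bar>f x\<bar>) \<partial>M"
  shows "continuous_on UNIV I" "I 0 = 0" "\<And>s. s \<ge> 0 \<Longrightarrow> I s \<ge> 0"
    "\<And>s. s \<ge> 0 \<Longrightarrow> (1 + \<eta>) * I s \<le> I ((1 + \<eta>) * s)"
    "\<And>t. t > 0 \<Longrightarrow> (\<integral>x. \<bar>f x\<bar> * yf \<Phi> \<eta> (t * \<bar>f x\<bar>) \<partial>M) = (I ((1 + \<eta>) * t) - I t) / (\<eta> * t)"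
    "\<And>t. t > 0 \<Longrightarrow> (\<integral>x. \<Psi> (yf \<Phi> \<eta> (t * \<bar>f x\<bar>)) \<partial>M) \<le> (1 + \<eta>) / \<eta> * (I ((1 + \<eta>) * t) - I t) - I t"
proof -
  have iP: "integrable M (\<lambda>x. \<Phi> (s * \<bar>f x\<bar>))" for s
    by (rule int_Cc[OF rad f contPhi[OF NP]]) (simp add: Nf_zero[OF NP])
  have P0: "\<Phi> 0 = 0" by (rule Nf_zero[OF NP])
  have cv: "convex_on UNIV \<Phi>" by (rule Nf_convex[OF NP])
  show "I 0 = 0" unfolding I_def by (simp add: P0)
  show "\<And>s. s \<ge> 0 \<Longrightarrow> I s \<ge> 0" unfolding I_def
    by (rule Bochner_Integration.integral_nonneg) (simp add: Nf_nonneg[OF NP])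
  have "convex_on UNIV I"
  proof (rule convex_onI)
    fix a x y :: real assume a: "a > 0" "a < 1"
    have "I ((1 - a) *\<^sub>R x + a *\<^sub>R y) = (\<integral>z. \<Phi> (((1 - a) * x + a * y) * \<bar>f z\<bar>) \<partial>M)"
      unfolding I_def by simp
    also have "\<dots> \<le> (\<integral>z. (1 - a) * \<Phi> (x * \<bar>f z\<bar>) + a * \<Phi> (y * \<bar>f z\<bar>) \<partial>M)"
    proof (rule integral_mono)
      show "integrable M (\<lambda>z. \<Phi> (((1 - a) * x + a * y) * \<bar>f z\<bar>))" by (rule iP)
      show "integrable M (\<lambda>z. (1 - a) * \<Phi> (x * \<bar>f z\<bar>) + a * \<Phi> (y * \<bar>f z\<bar>))" using iP by simp
      fix z
      have "((1 - a) * x + a * y) * \<bar>f z\<bar> = (1 - a) * (x * \<bar>f z\<bar>) + a * (y * \<bar>f z\<bar>)"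
        by (simp add: algebra_simps)
      then show "\<Phi> (((1 - a) * x + a * y) * \<bar>f z\<bar>) \<le> (1 - a) * \<Phi> (x * \<bar>f z\<bar>) + a * \<Phi> (y * \<bar>f z\<bar>)"
        using cvx[OF cv, of a "x * \<bar>f z\<bar>" "y * \<bar>f z\<bar>"] a by simp
    qed
    also have "\<dots> = (1 - a) * I x + a * I y" unfolding I_def
      using iP by simp
    finally show "I ((1 - a) *\<^sub>R x + a *\<^sub>R y) \<le> (1 - a) * I x + a * I y" .
  qed simp
  then show "continuous_on UNIV I" by (intro convex_on_continuous) auto
  show "(1 + \<eta>) * I s \<le> I ((1 + \<eta>) * s)" if s: "s \<ge> 0" for s
  proof -
    have pt: "(1 + \<eta>) * \<Phi> (s * \<bar>f z\<bar>) \<le> \<Phi> ((1 + \<eta>) * s * \<bar>f z\<bar>)" for z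
    proof -
      have e: "1 / (1 + \<eta>) * ((1 + \<eta>) * s * \<bar>f z\<bar>) = s * \<bar>f z\<bar>" using eta by simp
      have "\<Phi> (1 / (1 + \<eta>) * ((1 + \<eta>) * s * \<bar>f z\<bar>)) \<le> 1 / (1 + \<eta>) * \<Phi> ((1 + \<eta>) * s * \<bar>f z\<bar>)"
        using eta by (intro Nf_scale[OF NP]) auto
      then have "\<Phi> (s * \<bar>f z\<bar>) \<le> \<Phi> ((1 + \<eta>) * s * \<bar>f z\<bar>) / (1 + \<eta>)" unfolding e by simp
      then show ?thesis using eta by (simp add: le_divide_eq mult.commute)
    qed
    have "(1 + \<eta>) * I s = (\<integral>z. (1 + \<eta>) * \<Phi> (s * \<bar>f z\<bar>) \<partial>M)" unfolding I_def by simp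
    also have "\<dots> \<le> I ((1 + \<eta>) * s)" unfolding I_def
      by (rule integral_mono) (use iP pt in auto)
    finally show ?thesis .
  qed
  show "(\<integral>x. \<bar>f x\<bar> * yf \<Phi> \<eta> (t * \<bar>f x\<bar>) \<partial>M) = (I ((1 + \<eta>) * t) - I t) / (\<eta> * t)" if t: "t > 0" for t
  proof -
    have pt: "\<bar>z\<bar> * yf \<Phi> \<eta> (t * \<bar>z\<bar>) = (\<Phi> ((1 + \<eta>) * t * \<bar>z\<bar>) - \<Phi> (t * \<bar>z\<bar>)) / (\<eta> * t)" for z
    proof (cases "z = 0")
      case True then show ?thesis by (simp add: P0)
    next
      case False
      have e: "(1 + \<eta>) * (t * \<bar>z\<bar>) = (1 + \<eta>) * t * \<bar>z\<bar>" by (simp only: mult.assoc)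
      have nz: "\<eta> * (t * \<bar>z\<bar>) \<noteq> 0" using False t eta by simp
      have "\<bar>z\<bar> * ((\<Phi> ((1 + \<eta>) * t * \<bar>z\<bar>) - \<Phi> (t * \<bar>z\<bar>)) / (\<eta> * (t * \<bar>z\<bar>)))
          = (\<Phi> ((1 + \<eta>) * t * \<bar>z\<bar>) - \<Phi> (t * \<bar>z\<bar>)) / (\<eta> * t)"
        using False by (simp add: divide_simps)
      then show ?thesis unfolding yf_def e .
    qed
    have "(\<integral>x. \<bar>f x\<bar> * yf \<Phi> \<eta> (t * \<bar>f x\<bar>) \<partial>M)
        = (\<integral>x. (\<Phi> ((1 + \<eta>) * t * \<bar>f x\<bar>) - \<Phi> (t * \<bar>f x\<bar>)) / (\<eta> * t) \<partial>M)"
      by (simp only: pt)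
    also have "\<dots> = (\<integral>x. \<Phi> ((1 + \<eta>) * t * \<bar>f x\<bar>) - \<Phi> (t * \<bar>f x\<bar>) \<partial>M) / (\<eta> * t)"
      by (rule integral_divide_zero)
    also have "(\<integral>x. \<Phi> ((1 + \<eta>) * t * \<bar>f x\<bar>) - \<Phi> (t * \<bar>f x\<bar>) \<partial>M) = I ((1 + \<eta>) * t) - I t"
      unfolding I_def by (rule Bochner_Integration.integral_diff[OF iP iP])
    finally show ?thesis .
  qed
  show "(\<integral>x. \<Psi> (yf \<Phi> \<eta> (t * \<bar>f x\<bar>)) \<partial>M) \<le> (1 + \<eta>) / \<eta> * (I ((1 + \<eta>) * t) - I t) - I t"
    if t: "t > 0" for t
  proof -
    have pt: "\<Psi> (yf \<Phi> \<eta> s) \<le> (1 + \<eta>) / \<eta> * (\<Phi> ((1 + \<eta>) * s) - \<Phi> s) - \<Phi> s" if s: "s \<ge> 0" for s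
    proof (cases "s = 0")
      case True then show ?thesis using Nf_zero[OF NQ] by (simp add: P0)
    next
      case False
      then have s0: "s > 0" using s by simp
      have "\<Psi> (yf \<Phi> \<eta> s) \<le> (1 + \<eta>) * s * yf \<Phi> \<eta> s - \<Phi> s"
        using Psi_bound[OF NP s0 eta] PQ unfolding yf_def by simp
      also have "(1 + \<eta>) * s * yf \<Phi> \<eta> s = (1 + \<eta>) / \<eta> * (\<Phi> ((1 + \<eta>) * s) - \<Phi> s)"
      proof -
        define X where "X = \<Phi> ((1 + \<eta>) * s) - \<Phi> s"
        have "s * (X / (\<eta> * s)) = X / \<eta>" using s0 by simp
        then have "(1 + \<eta>) * s * (X / (\<eta> * s)) = (1 + \<eta>) * (X / \<eta>)" by (simp only: mult.assoc)
        then show ?thesis unfolding yf_def X_def[symmetric] by simp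
      qed
      finally show ?thesis .
    qed
    have "(\<integral>x. \<Psi> (yf \<Phi> \<eta> (t * \<bar>f x\<bar>)) \<partial>M)
        \<le> (\<integral>x. (1 + \<eta>) / \<eta> * (\<Phi> ((1 + \<eta>) * t * \<bar>f x\<bar>) - \<Phi> (t * \<bar>f x\<bar>)) - \<Phi> (t * \<bar>f x\<bar>) \<partial>M)"
    proof (rule integral_mono)
      show "integrable M (\<lambda>x. \<Psi> (yf \<Phi> \<eta> (t * \<bar>f x\<bar>)))"
      proof -
        have c1: "continuous_on UNIV (\<lambda>z. yf \<Phi> \<eta> (t * \<bar>z\<bar>))"
          by (rule continuous_on_compose2[OF yf_cont[OF NP eta]]) (auto intro!: continuous_intros)
        have c2: "continuous_on UNIV (\<lambda>z. \<Psi> (yf \<Phi> \<eta> (t * \<bar>z\<bar>)))"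
          by (rule continuous_on_compose2[OF Nf_cont[OF NQ] c1]) simp
        show ?thesis by (rule int_Cc[OF rad f c2]) (simp add: Nf_zero[OF NQ])
      qed
      show "integrable M (\<lambda>x. (1 + \<eta>) / \<eta> * (\<Phi> ((1 + \<eta>) * t * \<bar>f x\<bar>) - \<Phi> (t * \<bar>f x\<bar>)) - \<Phi> (t * \<bar>f x\<bar>))"
        by (rule Bochner_Integration.integrable_diff[OF Bochner_Integration.integrable_mult_right[OF Bochner_Integration.integrable_diff[OF iP iP]] iP])
      fix x
      show "\<Psi> (yf \<Phi> \<eta> (t * \<bar>f x\<bar>)) \<le> (1 + \<eta>) / \<eta> * (\<Phi> ((1 + \<eta>) * t * \<bar>f x\<bar>) - \<Phi> (t * \<bar>f x\<bar>)) - \<Phi> (t * \<bar>f x\<bar>)"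
      proof -
        have e: "(1 + \<eta>) * (t * \<bar>f x\<bar>) = (1 + \<eta>) * t * \<bar>f x\<bar>" by (simp only: mult.assoc)
        have "t * \<bar>f x\<bar> \<ge> 0" using t by simp
        from pt[OF this] show ?thesis unfolding e .
      qed
    qed
    also have "\<dots> = (\<integral>x. (1 + \<eta>) / \<eta> * (\<Phi> ((1 + \<eta>) * t * \<bar>f x\<bar>) - \<Phi> (t * \<bar>f x\<bar>)) \<partial>M) - I t"
      unfolding I_def by (rule Bochner_Integration.integral_diff[OF Bochner_Integration.integrable_mult_right[OF Bochner_Integration.integrable_diff[OF iP iP]] iP])
    also have "(\<integral>x. (1 + \<eta>) / \<eta> * (\<Phi> ((1 + \<eta>) * t * \<bar>f x\<bar>) - \<Phi> (t * \<bar>f x\<bar>)) \<partial>M)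
        = (1 + \<eta>) / \<eta> * (\<integral>x. \<Phi> ((1 + \<eta>) * t * \<bar>f x\<bar>) - \<Phi> (t * \<bar>f x\<bar>) \<partial>M)"
      by (rule integral_mult_right_zero)
    also have "(\<integral>x. \<Phi> ((1 + \<eta>) * t * \<bar>f x\<bar>) - \<Phi> (t * \<bar>f x\<bar>) \<partial>M) = I ((1 + \<eta>) * t) - I t"
      unfolding I_def by (rule Bochner_Integration.integral_diff[OF iP iP])
    finally show ?thesis .
  qed
qed



lemma eta_c: "(\<eta>::real) > 0 \<Longrightarrow> 1 + 1 / \<eta> \<noteq> 0"
proof -
  assume "\<eta> > 0"
  then have "1 / \<eta> > 0" by simp
  then show ?thesis by linarith
qed

lemma half_lem: "(a::real) \<noteq> 0 \<Longrightarrow> N \<noteq> 0 \<Longrightarrow> a / (2 * a / N) = N / 2"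
  by (simp add: field_simps)

theorem theorem3p5:
  fixes G2 :: "('a::{t2_space, second_countable_topology} \<times> 'a) set"
    and gmult :: "'a \<Rightarrow> 'a \<Rightarrow> 'a" and ginv :: "'a \<Rightarrow> 'a"
    and lam :: "'a \<Rightarrow> 'a measure"
    and \<Phi> \<Psi> :: "real \<Rightarrow> real" and f :: "'a \<Rightarrow> real"
  assumes "lc_groupoid G2 gmult ginv"
    and "left_haar_system G2 gmult ginv lam"
    and "N_function \<Phi>" and "N_function \<Psi>"
    and "\<Psi> = complementary_function \<Phi>"
    and "Delta2 (compact (UNIV :: 'a set)) \<Phi>"
    and "f \<in> Cc"
  defines "g \<equiv> \<lambda>u. enn2real (orlicz_norm \<Psi>
                   (restrict_space (lam u) (range_map gmult ginv -` {u})) f)"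
  shows "(\<forall>u \<in> unit_space gmult ginv.
            orlicz_norm \<Psi> (restrict_space (lam u) (range_map gmult ginv -` {u})) f < \<infinity>)
       \<and> continuous_on (unit_space gmult ginv) g
       \<and> compact (closure {u \<in> unit_space gmult ginv. g u \<noteq> 0})"
proof -
  note NP = assms(3) and NQ = assms(4) and PQ = assms(5) and f = assms(7)
  have grp: "groupoid G2 gmult ginv" and ginvc: "continuous_on UNIV ginv"
    and multc: "continuous_on G2 (\<lambda>p. gmult (fst p) (snd p))"
    using assms(1) unfolding lc_groupoid_def by auto
  have inG2: "(x, ginv x) \<in> G2" for x
  proof -
    have "(ginv (ginv x), ginv x) \<in> G2" using grp unfolding groupoid_def by blast
    moreover have "ginv (ginv x) = x" using grp unfolding groupoid_def by blast
    ultimately show ?thesis by simp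
  qed
  define r where "r = range_map gmult ginv"
  have r_eq: "r = (\<lambda>x. (\<lambda>p. gmult (fst p) (snd p)) (x, ginv x))"
    by (simp add: r_def range_map_def fun_eq_iff)
  have rc: "continuous_on UNIV r" unfolding r_eq
  proof (rule continuous_on_compose2[OF multc])
    show "continuous_on UNIV (\<lambda>x. (x, ginv x))" by (intro continuous_on_Pair continuous_on_id ginvc)
    show "(\<lambda>x. (x, ginv x)) ` UNIV \<subseteq> G2" using inG2 by auto
  qed
  have clS: "closed (r -` {u})" for u
  proof (rule continuous_closed_vimage[OF closed_singleton])
    fix x show "continuous (at x) r" using rc by (simp add: continuous_on_eq_continuous_at)
  qed
  define G0 where "G0 = unit_space gmult ginv"
  have rad: "\<And>u. u \<in> G0 \<Longrightarrow> radon_measure (lam u)"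
    and supp: "\<And>u. u \<in> G0 \<Longrightarrow> measure_support (lam u) = r -` {u}"
    and JC: "\<And>F. F \<in> Cc \<Longrightarrow> continuous_on G0 (\<lambda>u. \<integral>x. F x \<partial>lam u)"
    using assms(2) unfolding left_haar_system_def G0_def r_def by auto
  define On where "On u = orlicz_norm \<Psi> (restrict_space (lam u) (r -` {u})) f" for u
  have g_eq: "g u = enn2real (On u)" for u unfolding g_def On_def r_def ..
  define I where "I u s = (\<integral>x. \<Phi> (s * \<bar>f x\<bar>) \<partial>lam u)" for u s
  define B where "B u s = (1 + I u s) / s" for u s
  define Vn where "Vn u \<eta> t = (\<integral>x. \<bar>f x\<bar> * yf \<Phi> \<eta> (t * \<bar>f x\<bar>) \<partial>lam u)" for u \<eta> t
  define Vd where "Vd u \<eta> t = max 1 (\<integral>x. \<Psi> (yf \<Phi> \<eta> (t * \<bar>f x\<bar>)) \<partial>lam u)" for u \<eta> t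

  have cY: "continuous_on UNIV (\<lambda>z. yf \<Phi> \<eta> (t * \<bar>z\<bar>))" if "\<eta> > 0" for \<eta> t
    by (rule continuous_on_compose2[OF yf_cont[OF NP that]]) (auto intro!: continuous_intros)
  have Yn: "yf \<Phi> \<eta> (t * \<bar>z\<bar>) \<ge> 0" if "\<eta> > 0" "t > 0" for \<eta> t z
    using that by (intro yf_nonneg[OF NP]) auto
  have I_nn: "I u s \<ge> 0" if "u \<in> G0" "s \<ge> 0" for u s
    using fiber(3)[OF rad[OF that(1)] NP NQ PQ f, of 1 s] that(2) unfolding I_def by simp

  have up: "On u \<le> ennreal (B u t)" if "u \<in> G0" "t > 0" for u t
    using orlicz_upper[OF rad[OF that(1)] supp[OF that(1)] clS NP NQ PQ f that(2)]
    unfolding On_def B_def I_def .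
  have fin: "On u < \<infinity>" if "u \<in> G0" for u
    using up[OF that, of 1] by (simp add: le_less_trans[OF _ ennreal_less_top])
  have fin': "On u < top" if "u \<in> G0" for u
    using fin[OF that] by simp
  have gup: "g u \<le> B u t" if "u \<in> G0" "t > 0" for u t
  proof -
    have "B u t \<ge> 0" unfolding B_def using I_nn[OF that(1), of t] that(2) by simp
    then show ?thesis unfolding g_eq by (rule enn2real_leI[OF _ up[OF that]])
  qed
  have lo: "Vn u \<eta> t / Vd u \<eta> t \<le> g u" if "u \<in> G0" "\<eta> > 0" "t > 0" for u \<eta> t
  proof -
    have "ennreal (Vn u \<eta> t / Vd u \<eta> t) \<le> On u"
      unfolding Vn_def Vd_def On_def
      by (rule orlicz_lower[OF rad[OF that(1)] supp[OF that(1)] clS NQ f cY[OF that(2)]])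
         (use Yn[OF that(2,3)] in simp_all)
    moreover have "Vn u \<eta> t / Vd u \<eta> t \<ge> 0" unfolding Vn_def Vd_def
      by (intro divide_nonneg_nonneg Bochner_Integration.integral_nonneg)
         (use Yn[OF that(2,3)] in auto)
    ultimately show ?thesis unfolding g_eq using enn2real_mono[OF _ fin'[OF that(1)]]
      by fastforce
  qed
  have BC: "continuous_on G0 (\<lambda>u. B u t)" if "t > 0" for t
  proof -
    have "(\<lambda>x. \<Phi> (t * \<bar>f x\<bar>)) \<in> Cc" by (rule Cc_comp[OF f contPhi[OF NP]]) (simp add: Nf_zero[OF NP])
    from JC[OF this] show ?thesis unfolding B_def I_def by (intro continuous_intros) (use that in auto)
  qed
  have VC: "continuous_on G0 (\<lambda>u. Vn u \<eta> t / Vd u \<eta> t)" if "\<eta> > 0" "t > 0" for \<eta> t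
  proof -
    have c1: "continuous_on UNIV (\<lambda>z. \<bar>z\<bar> * yf \<Phi> \<eta> (t * \<bar>z\<bar>))"
      by (intro continuous_intros cY[OF that(1)])
    have c2: "continuous_on UNIV (\<lambda>z. \<Psi> (yf \<Phi> \<eta> (t * \<bar>z\<bar>)))"
      by (rule continuous_on_compose2[OF Nf_cont[OF NQ] cY[OF that(1)]]) simp
    have "(\<lambda>x. \<bar>f x\<bar> * yf \<Phi> \<eta> (t * \<bar>f x\<bar>)) \<in> Cc" by (rule Cc_comp[OF f c1]) simp
    from JC[OF this] have n: "continuous_on G0 (\<lambda>u. Vn u \<eta> t)" unfolding Vn_def .
    have "(\<lambda>x. \<Psi> (yf \<Phi> \<eta> (t * \<bar>f x\<bar>))) \<in> Cc" by (rule Cc_comp[OF f c2]) (simp add: Nf_zero[OF NQ])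
    from JC[OF this] have d: "continuous_on G0 (\<lambda>u. Vd u \<eta> t)" unfolding Vd_def
      by (intro continuous_intros)
    show ?thesis by (rule continuous_on_divide[OF n d]) (auto simp: Vd_def max_def)
  qed
  have evG0: "eventually (\<lambda>u. u \<in> G0) (at u0 within G0)" for u0
    by (simp add: eventually_at_filter)

  have dich: "(\<exists>t>0. Vd u0 \<eta> t = 1 \<and> Vn u0 \<eta> t = B u0 t / (1 + \<eta>)) \<or> (\<forall>t>0. I u0 t < 1 / \<eta>)"
    if u0: "u0 \<in> G0" and eta: "\<eta> > 0" for u0 \<eta>
  proof -
    note F = fiber[OF rad[OF u0] NP NQ PQ f eta]
    have "(\<exists>t>0. (1 + \<eta>) / \<eta> * (I u0 ((1 + \<eta>) * t) - I u0 t) - I u0 t = 1) \<or> (\<forall>t>0. I u0 t < 1 / \<eta>)"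
      using core[of "I u0" \<eta>, OF F(1)[folded I_def] F(2)[folded I_def] F(3)[folded I_def] F(4)[folded I_def] eta]
      unfolding I_def by blast
    then show ?thesis
    proof
      assume "\<exists>t>0. (1 + \<eta>) / \<eta> * (I u0 ((1 + \<eta>) * t) - I u0 t) - I u0 t = 1"
      then obtain t where t: "t > 0" and G: "(1 + \<eta>) / \<eta> * (I u0 ((1 + \<eta>) * t) - I u0 t) - I u0 t = 1"
        by blast
      have "(\<integral>x. \<Psi> (yf \<Phi> \<eta> (t * \<bar>f x\<bar>)) \<partial>lam u0) \<le> 1"
        using F(6)[OF t] G unfolding I_def by simp
      then have d: "Vd u0 \<eta> t = 1" unfolding Vd_def by simp
      have vn: "Vn u0 \<eta> t = (I u0 ((1 + \<eta>) * t) - I u0 t) / (\<eta> * t)"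
        using F(5)[OF t] unfolding Vn_def I_def by simp
      have "(I u0 ((1 + \<eta>) * t) - I u0 t) / \<eta> = (1 + I u0 t) / (1 + \<eta>)"
        using G eta by (simp add: field_simps)
      moreover have "(I u0 ((1 + \<eta>) * t) - I u0 t) / (\<eta> * t) = ((I u0 ((1 + \<eta>) * t) - I u0 t) / \<eta>) / t"
        by (simp add: divide_divide_eq_left)
      moreover have "((1 + I u0 t) / t) / (1 + \<eta>) = ((1 + I u0 t) / (1 + \<eta>)) / t"
        by (simp add: divide_divide_eq_left mult.commute)
      ultimately have "Vn u0 \<eta> t = B u0 t / (1 + \<eta>)" unfolding vn B_def by simp
      with d t show ?thesis by blast
    qed simp
  qed

  have cont: "continuous_on G0 g" unfolding continuous_on_def
  proof (intro ballI order_tendstoI)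
    fix u0 a assume u0: "u0 \<in> G0"
    let ?N = "g u0"
    have N0: "?N \<ge> 0" unfolding g_eq by simp
    {
      assume aN: "a < ?N"
      show "eventually (\<lambda>u. a < g u) (at u0 within G0)"
      proof (cases "a < 0")
        case True then show ?thesis unfolding g_eq
          by (intro always_eventually allI) (meson enn2real_nonneg less_le_trans)
      next
        case False
        then have a0: "a \<ge> 0" by simp
        define \<eta> where "\<eta> = (?N - a) / (a + 1)"
        have eta: "\<eta> > 0" using aN a0 unfolding \<eta>_def by simp
        have aeta: "a * (1 + \<eta>) < ?N"
        proof -
          have "a * \<eta> = (a / (a + 1)) * (?N - a)" unfolding \<eta>_def using a0 by simp
          also have "\<dots> < 1 * (?N - a)" using a0 aN by (intro mult_strict_right_mono) auto
          finally show ?thesis by (simp add: algebra_simps)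
        qed
        from dich[OF u0 eta] show ?thesis
        proof
          assume "\<exists>t>0. Vd u0 \<eta> t = 1 \<and> Vn u0 \<eta> t = B u0 t / (1 + \<eta>)"
          then obtain t where t: "t > 0" "Vd u0 \<eta> t = 1" "Vn u0 \<eta> t = B u0 t / (1 + \<eta>)" by blast
          have "?N / (1 + \<eta>) \<le> B u0 t / (1 + \<eta>)" using gup[OF u0 t(1)] eta by (simp add: divide_right_mono)
          moreover have "a < ?N / (1 + \<eta>)" using aeta eta by (simp add: field_simps)
          ultimately have "a < Vn u0 \<eta> t / Vd u0 \<eta> t" using t by simp
          moreover have "((\<lambda>u. Vn u \<eta> t / Vd u \<eta> t) \<longlongrightarrow> Vn u0 \<eta> t / Vd u0 \<eta> t) (at u0 within G0)"
            using VC[OF eta t(1)] u0 unfolding continuous_on_def by blast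
          ultimately have "eventually (\<lambda>u. a < Vn u \<eta> t / Vd u \<eta> t) (at u0 within G0)"
            by (rule order_tendstoD(1)[rotated])
          then show ?thesis using evG0[of u0]
            by eventually_elim (use lo eta t(1) in \<open>fastforce intro: less_le_trans\<close>)
        next
          assume H: "\<forall>t>0. I u0 t < 1 / \<eta>"
          define t where "t = 2 * (1 + 1 / \<eta>) / ?N"
          have Npos: "?N > 0" using aN a0 by simp
          have t0: "t > 0" unfolding t_def using Npos eta by (intro divide_pos_pos mult_pos_pos add_pos_pos) auto
          have "?N \<le> B u0 t" by (rule gup[OF u0 t0])
          also have "\<dots> < (1 + 1 / \<eta>) / t" unfolding B_def using H t0 by (simp add: divide_strict_right_mono)
          also have "\<dots> = ?N / 2" unfolding t_def using Npos eta by (intro half_lem) (use eta_c[OF eta] in auto)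
          finally show ?thesis using Npos by simp
        qed
      qed
    }
    {
      assume aN: "?N < a"
      show "eventually (\<lambda>u. g u < a) (at u0 within G0)"
      proof -
        have a0: "a > 0" using aN N0 by simp
        define \<eta> where "\<eta> = (a - ?N) / (?N + 1)"
        have eta: "\<eta> > 0" using aN N0 unfolding \<eta>_def by simp
        have aeta: "(1 + \<eta>) * ?N < a"
        proof -
          have "\<eta> * ?N = (?N / (?N + 1)) * (a - ?N)" unfolding \<eta>_def using N0 by simp
          also have "\<dots> < 1 * (a - ?N)" using N0 aN by (intro mult_strict_right_mono) auto
          finally show ?thesis by (simp add: algebra_simps)
        qed
        have "\<exists>t>0. B u0 t < a"
        proof (rule disjE[OF dich[OF u0 eta]])
          assume "\<exists>t>0. Vd u0 \<eta> t = 1 \<and> Vn u0 \<eta> t = B u0 t / (1 + \<eta>)"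
          then obtain t where t: "t > 0" "Vd u0 \<eta> t = 1" "Vn u0 \<eta> t = B u0 t / (1 + \<eta>)" by blast
          have "B u0 t = (1 + \<eta>) * (Vn u0 \<eta> t / Vd u0 \<eta> t)" using t eta by simp
          also have "\<dots> \<le> (1 + \<eta>) * ?N" using lo[OF u0 eta t(1)] eta by (intro mult_left_mono) auto
          finally show ?thesis using aeta t(1) by auto
        next
          assume H: "\<forall>t>0. I u0 t < 1 / \<eta>"
          define t where "t = 2 * (1 + 1 / \<eta>) / a"
          have t0: "t > 0" unfolding t_def using a0 eta by (intro divide_pos_pos mult_pos_pos add_pos_pos) auto
          have "B u0 t < (1 + 1 / \<eta>) / t" unfolding B_def using H t0 by (simp add: divide_strict_right_mono)
          also have "\<dots> = a / 2" unfolding t_def using a0 eta by (intro half_lem) (use eta_c[OF eta] in auto)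
          finally show ?thesis using t0 a0 by (intro exI[of _ t]) auto
        qed
        then obtain t where t: "t > 0" "B u0 t < a" by blast
        have "((\<lambda>u. B u t) \<longlongrightarrow> B u0 t) (at u0 within G0)"
          using BC[OF t(1)] u0 unfolding continuous_on_def by blast
        then have "eventually (\<lambda>u. B u t < a) (at u0 within G0)"
          using t(2) by (rule order_tendstoD(2))
        then show ?thesis using evG0[of u0]
          by eventually_elim (use gup t(1) in \<open>fastforce intro: le_less_trans\<close>)
      qed
    }
  qed

  define C where "C = closure {x. f x \<noteq> 0}"
  have Cc: "compact C" using f unfolding Cc_def C_def by auto
  have rC: "compact (r ` C)" by (rule compact_continuous_image[OF continuous_on_subset[OF rc] Cc]) simp
  have sub: "{u \<in> G0. g u \<noteq> 0} \<subseteq> r ` C"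
  proof
    fix u assume u: "u \<in> {u \<in> G0. g u \<noteq> 0}"
    show "u \<in> r ` C"
    proof (rule ccontr)
      assume nu: "u \<notin> r ` C"
      have z: "f x = 0" if "x \<in> r -` {u}" for x
      proof (rule ccontr)
        assume "f x \<noteq> 0"
        then have "x \<in> C" unfolding C_def using closure_subset[of "{x. f x \<noteq> 0}"] by auto
        then show False using nu that by auto
      qed
      have "On u \<le> 0" unfolding On_def orlicz_norm_def
      proof (rule SUP_least)
        fix k
        have "(\<integral>\<^sup>+x. ennreal \<bar>f x * k x\<bar> \<partial>restrict_space (lam u) (r -` {u})) = (\<integral>\<^sup>+x. 0 \<partial>restrict_space (lam u) (r -` {u}))"
          by (rule nn_integral_cong) (simp add: space_restrict_space z)
        then show "(\<integral>\<^sup>+x. ennreal \<bar>f x * k x\<bar> \<partial>restrict_space (lam u) (r -` {u})) \<le> 0" by simp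
      qed
      then have "g u = 0" unfolding g_eq by simp
      then show False using u by simp
    qed
  qed
  have "closure {u \<in> G0. g u \<noteq> 0} \<subseteq> r ` C"
    by (rule closure_minimal[OF sub compact_imp_closed[OF rC]])
  then have "closure {u \<in> G0. g u \<noteq> 0} = closure {u \<in> G0. g u \<noteq> 0} \<inter> r ` C" by blast
  moreover have "compact (closure {u \<in> G0. g u \<noteq> 0} \<inter> r ` C)" using rC by (intro closed_Int_compact) auto
  ultimately have cpt: "compact (closure {u \<in> G0. g u \<noteq> 0})" by simp
  show ?thesis using fin cont cpt unfolding G0_def On_def r_def by blast
qed

end
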